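(* Let $H$ be a $6\times 6$ complex Hadamard matrix having a $3\times 3$ submatrix (formed by any three rows and any three columns) with zero determinant. Then $H$ belongs to the family $K_6^{(3)}$, i.e. $H$ is equivalent to a dephased complex Hadamard matrix whose core contains an entry equal to $-1$.
   Context: A complex Hadamard matrix of order $n$ is an $n\times n$ complex matrix with all entries of modulus $1$ satisfying $HH^\ast=nI_n$. Two complex Hadamard matrices $H,K$ are equivalent if $K=P_1D_1HD_2P_2$ for permutation matrices $P_1,P_2$ and diagonal unitary matrices $D_1,D_2$. A complex Hadamard matrix is dephased if its first row and first column consist of $1$'s; its core is the lower right $(n-1)\times(n-1)$ submatrix. We say a $6\times6$ complex Hadamard matrix belongs to the family $K_6^{(3)}$ if it is equivalent to a dephased complex Hadamard matrix whose core contains an entry $-1$ (by a theorem of Karlsson these are exactly the matrices of his three-parameter family $K_6^{(3)}$, equivalently the $H_2$-reducible ones). *)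

theory Defs
  imports "HOL-Analysis.Analysis" "HOL-Library.Numeral_Type"
begin

definition conj_transpose :: "complex ^ 'n ^ 'm \<Rightarrow> complex ^ 'm ^ 'n" where
  "conj_transpose A = (\<chi> i j. cnj (A $ j $ i))"

definition complex_hadamard :: "complex ^ 'n ^ 'n \<Rightarrow> bool" where
  "complex_hadamard H \<longleftrightarrow>
     (\<forall>i j. cmod (H $ i $ j) = 1) \<and>
     H ** conj_transpose H = of_nat CARD('n) *\<^sub>R mat 1"

definition permutation_matrix :: "complex ^ 'n ^ 'n \<Rightarrow> bool" where
  "permutation_matrix P \<longleftrightarrow>
     (\<exists>p. p permutes (UNIV :: 'n set) \<and> P = (\<chi> i j. if j = p i then 1 else 0))"

definition diagonal_unitary :: "complex ^ 'n ^ 'n \<Rightarrow> bool" where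
  "diagonal_unitary D \<longleftrightarrow>
     (\<exists>d. (\<forall>i. cmod (d i) = 1) \<and> D = (\<chi> i j. if i = j then d i else 0))"

definition hadamard_equivalent :: "complex ^ 'n ^ 'n \<Rightarrow> complex ^ 'n ^ 'n \<Rightarrow> bool" where
  "hadamard_equivalent H K \<longleftrightarrow>
     (\<exists>P1 D1 D2 P2. permutation_matrix P1 \<and> diagonal_unitary D1 \<and>
        diagonal_unitary D2 \<and> permutation_matrix P2 \<and>
        K = P1 ** D1 ** H ** D2 ** P2)"

text \<open>Dephased w.r.t. the first index 0 of the index type (indices 0..5 for order 6).\<close>
definition dephased :: "complex ^ 6 ^ 6 \<Rightarrow> bool" where
  "dephased H \<longleftrightarrow> (\<forall>j. H $ 0 $ j = 1) \<and> (\<forall>i. H $ i $ 0 = 1)"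

definition core_has_minus_one :: "complex ^ 6 ^ 6 \<Rightarrow> bool" where
  "core_has_minus_one H \<longleftrightarrow> (\<exists>i j. i \<noteq> 0 \<and> j \<noteq> 0 \<and> H $ i $ j = -1)"

definition in_K6_3 :: "complex ^ 6 ^ 6 \<Rightarrow> bool" where
  "in_K6_3 H \<longleftrightarrow>
     (\<exists>K. complex_hadamard K \<and> hadamard_equivalent H K \<and> dephased K \<and> core_has_minus_one K)"

definition submatrix3 :: "complex ^ 6 ^ 6 \<Rightarrow> (3 \<Rightarrow> 6) \<Rightarrow> (3 \<Rightarrow> 6) \<Rightarrow> complex ^ 3 ^ 3" where
  "submatrix3 H r c = (\<chi> i j. H $ r i $ c j)"

end

theory Submission imports Defs begin

definition H2red :: "complex ^ 6 ^ 6 \<Rightarrow> bool" where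
  "H2red H \<longleftrightarrow> (\<exists>i k j l. i \<noteq> k \<and> j \<noteq> l \<and> H$i$j * H$k$l + H$i$l * H$k$j = 0)"

lemma unit_mult_cnj: "cmod z = 1 \<Longrightarrow> z * cnj z = 1"
  by (metis complex_norm_square mult.commute of_real_1 power_one)

lemma unit_Re_m1: "cmod z = 1 \<Longrightarrow> Re z = -1 \<Longrightarrow> z = -1"
proof -
  assume a: "cmod z = 1" "Re z = -1"
  have "Re z ^2 + Im z ^2 = 1" using a(1) cmod_power2[of z] by simp
  then have "Im z = 0" using a(2) by simp
  then show ?thesis using a(2) by (simp add: complex_eq_iff)
qed

lemma had_unit: "complex_hadamard H \<Longrightarrow> cmod (H$i$j) = 1"
  unfolding complex_hadamard_def by blast

lemma had_orth:
  fixes H :: "complex^'n^'n"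
  assumes "complex_hadamard H"
  shows "(\<Sum>j\<in>UNIV. H$p$j * cnj (H$q$j)) = (if p = q then of_nat CARD('n) else 0)"
proof -
  have "(H ** conj_transpose H)$p$q = (of_nat CARD('n) *\<^sub>R mat 1 :: complex^'n^'n)$p$q"
    using assms unfolding complex_hadamard_def by simp
  then show ?thesis
    by (simp add: matrix_matrix_mult_def conj_transpose_def mat_def vector_scaleR_component)
      (simp add: scaleR_conv_of_real)
qed

lemma had_orth_col:
  fixes H :: "complex^'n^'n"
  assumes "complex_hadamard H"
  shows "(\<Sum>t\<in>UNIV. cnj (H$t$a) * H$t$b) = (if a = b then of_nat CARD('n) else 0)"
proof -
  define A' :: "complex^'n^'n" where "A' = (\<chi> i j. cnj (H$j$i) / of_nat CARD('n))"
  have "H ** A' = mat 1"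
  unfolding vec_eq_iff proof (intro allI)
    fix p q
    have "(H ** A')$p$q = (\<Sum>j\<in>UNIV. H$p$j * cnj (H$q$j)) / of_nat CARD('n)"
      by (simp add: matrix_matrix_mult_def A'_def sum_divide_distrib)
    then show "(H ** A')$p$q = mat 1 $p$q"
      using had_orth[OF assms, of p q] by (simp add: mat_def)
  qed
  then have "A' ** H = mat 1" using matrix_left_right_inverse by blast
  then have "(A' ** H)$a$b = mat 1 $a$b" by simp
  moreover have "(A' ** H)$a$b = (\<Sum>t\<in>UNIV. cnj (H$t$a) * H$t$b) / of_nat CARD('n)"
    by (simp add: matrix_matrix_mult_def A'_def sum_divide_distrib)
  ultimately show ?thesis by (simp add: mat_def split: if_splits)
qed

lemma had_transpose:
  fixes H :: "complex^'n^'n"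
  assumes "complex_hadamard H"
  shows "complex_hadamard (\<chi> i j. H$j$i)"
  unfolding complex_hadamard_def
proof (intro conjI allI)
  fix i j show "cmod ((\<chi> i j. H$j$i) $ i $ j) = 1" using had_unit[OF assms] by simp
next
  show "(\<chi> i j. H$j$i) ** conj_transpose (\<chi> i j. H$j$i) = of_nat CARD('n) *\<^sub>R mat 1"
  unfolding vec_eq_iff proof (intro allI)
    fix p q
    have "((\<chi> i j. H$j$i) ** conj_transpose (\<chi> i j. H$j$i))$p$q = cnj (\<Sum>t\<in>UNIV. cnj (H$t$p) * H$t$q)"
      by (simp add: matrix_matrix_mult_def conj_transpose_def mult.commute)
    then show "((\<chi> i j. H$j$i) ** conj_transpose (\<chi> i j. H$j$i))$p$q = (of_nat CARD('n) *\<^sub>R mat 1 :: complex^'n^'n)$p$q"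
      using had_orth_col[OF assms, of p q] by (simp add: mat_def vector_scaleR_component) (simp add: scaleR_conv_of_real)
  qed
qed

lemma H2red_transpose: "H2red (\<chi> i j. H$j$i) \<Longrightarrow> H2red H"
  unfolding H2red_def
proof (elim exE conjE)
  fix i k j l
  assume "i \<noteq> k" "j \<noteq> l" "(\<chi> i j. H$j$i) $ i $ j * (\<chi> i j. H$j$i) $ k $ l + (\<chi> i j. H$j$i) $ i $ l * (\<chi> i j. H$j$i) $ k $ j = 0"
  then show "\<exists>i k j l. i \<noteq> k \<and> j \<noteq> l \<and> H $ i $ j * H $ k $ l + H $ i $ l * H $ k $ j = 0"
    by (intro exI[of _ j] exI[of _ l] exI[of _ i] exI[of _ k]) (simp add: algebra_simps)
qed

lemma prop_rows:
  fixes H :: "complex^6^6" and c :: "3 \<Rightarrow> 6"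
  assumes had: "complex_hadamard H" and pq: "p \<noteq> q" and c: "inj c"
    and lam: "\<And>t. H$q$(c t) = m * H$p$(c t)"
  shows "H2red H"
proof -
  have l1: "cmod m = 1" 
  proof -
    have "cmod (H$q$(c 0)) = cmod m * cmod (H$p$(c 0))" by (simp add: lam norm_mult)
    then show ?thesis using had_unit[OF had] by simp
  qed
  define u where "u j = H$p$j * cnj (H$q$j) * m" for j
  have u1: "cmod (u j) = 1" for j using had_unit[OF had] l1 by (simp add: u_def norm_mult)
  have sum0: "(\<Sum>j\<in>UNIV. u j) = 0"
    using had_orth[OF had, of p q] pq by (simp add: u_def sum_distrib_right[symmetric])
  have uc: "u j = 1" if jc: "j \<in> range c" for j
  proof -
    obtain t where j: "j = c t" using jc by blast
    have "u j = (H$p$(c t) * cnj (H$p$(c t))) * (m * cnj m)"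
      by (simp add: u_def j lam)
    then show ?thesis using unit_mult_cnj[OF had_unit[OF had]] unit_mult_cnj[OF l1] by simp
  qed
  have cardc: "card (range c) = 3" using c by (simp add: card_image)
  have cardnc: "card (- range c) = 3" 
  proof -
    have "card (- range c) = card (UNIV - range c)" by (simp add: Compl_eq_Diff_UNIV)
    also have "\<dots> = CARD(6) - card (range c)" by (simp add: card_Diff_subset)
    finally show ?thesis using cardc by simp
  qed
  have "(\<Sum>j\<in>UNIV. u j) = (\<Sum>j\<in>range c. u j) + (\<Sum>j\<in>- range c. u j)"
    using sum.union_disjoint[of "range c" "- range c" u] by (simp add: Compl_partition)
  also have "(\<Sum>j\<in>range c. u j) = 3" using uc cardc by simp
  finally have s3: "(\<Sum>j\<in>- range c. u j) = -3" using sum0 by (metis add.commute add_eq_0_iff)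
  have "(\<Sum>j\<in>- range c. Re (u j) + 1) = Re (\<Sum>j\<in>- range c. u j) + 3"
    using cardnc by (simp add: sum.distrib Re_sum)
  then have "(\<Sum>j\<in>- range c. Re (u j) + 1) = 0" using s3 by simp
  moreover have "\<forall>j. 0 \<le> Re (u j) + 1"
  proof
    fix j show "0 \<le> Re (u j) + 1" using abs_Re_le_cmod[of "u j"] u1[of j] by linarith
  qed
  ultimately have re: "\<forall>j\<in>- range c. Re (u j) + 1 = 0"
    using sum_nonneg_eq_0_iff[of "- range c" "\<lambda>j. Re (u j) + 1"] by simp
  have "range c \<noteq> UNIV"
  proof
    assume "range c = UNIV"
    then have "card (range c) = CARD(6)" by simp
    then show False using cardc by simp
  qed
  then obtain l where l: "l \<notin> range c" by blast
  have "Re (u l) + 1 = 0" using re l by simp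
  then have ul: "u l = -1" using u1[of l] unit_Re_m1[of "u l"] by simp
  have "H$p$l * m * (cnj (H$q$l) * H$q$l) = - H$q$l" using ul by (simp add: u_def algebra_simps)
  then have e: "H$p$l * m = - H$q$l"
    using unit_mult_cnj[OF had_unit[OF had, of q l]] by (simp add: mult.commute)
  have "H$p$(c 0) * H$q$l + H$p$l * H$q$(c 0) = H$p$(c 0) * (H$q$l + H$p$l * m)"
    by (simp add: lam algebra_simps)
  also have "\<dots> = 0" using e by simp
  finally show ?thesis unfolding H2red_def using pq l
    by (intro exI[of _ p] exI[of _ q] exI[of _ "c 0"] exI[of _ l]) auto
qed

lemma cmod_add_sq: "cmod (a + b)^2 = cmod a ^2 + cmod b ^2 + 2 * Re (cnj a * b)"
  unfolding cmod_power2 by (simp add: power2_eq_square algebra_simps)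

lemma tri_aux:
  fixes x0 x1 x2 z w :: complex
  assumes "cmod z = 1" "cmod w = 1" "x0 + x1*z + x2*w = 0"
  shows "Re (cnj x0 * x1 * z) = (cmod x2 ^2 - cmod x0 ^2 - cmod x1 ^2) / 2"
    and "Im (cnj x0 * x1 * z) ^2 = (cmod x0 * cmod x1)^2 - ((cmod x2 ^2 - cmod x0 ^2 - cmod x1 ^2) / 2)^2"
proof -
  have "x0 + x1*z = - (x2*w)" using assms(3) by (simp add: eq_neg_iff_add_eq_0)
  then have "cmod (x0 + x1*z) ^2 = cmod x2 ^2" using assms(2) by (simp add: norm_mult)
  then have "cmod x0 ^2 + cmod x1 ^2 + 2 * Re (cnj x0 * (x1 * z)) = cmod x2 ^2"
    using assms(1) by (simp add: cmod_add_sq norm_mult)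
  then show r: "Re (cnj x0 * x1 * z) = (cmod x2 ^2 - cmod x0 ^2 - cmod x1 ^2) / 2"
    by (simp only: mult.assoc) (simp add: field_simps)
  have "cmod (cnj x0 * x1 * z) = cmod x0 * cmod x1" using assms(1) by (simp add: norm_mult)
  then have "Re (cnj x0 * x1 * z)^2 + Im (cnj x0 * x1 * z)^2 = (cmod x0 * cmod x1)^2"
    by (metis cmod_power2)
  then have e: "Im (cnj x0 * x1 * z)^2 = (cmod x0 * cmod x1)^2 - Re (cnj x0 * x1 * z)^2" by linarith
  show "Im (cnj x0 * x1 * z) ^2 = (cmod x0 * cmod x1)^2 - ((cmod x2 ^2 - cmod x0 ^2 - cmod x1 ^2) / 2)^2"
    using e unfolding r .
qed

lemma sq3: "(a::real)^2 = b^2 \<Longrightarrow> a^2 = c^2 \<Longrightarrow> a = b \<or> a = c \<or> b = c"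
  by (metis power2_eq_iff)

lemma tri:
  fixes x0 x1 x2 :: complex
  assumes nz: "x0 \<noteq> 0" "x1 \<noteq> 0" "x2 \<noteq> 0"
    and s0: "cmod z0 = 1" "cmod w0 = 1" "x0 + x1*z0 + x2*w0 = 0"
    and s1: "cmod z1 = 1" "cmod w1 = 1" "x0 + x1*z1 + x2*w1 = 0"
    and s2: "cmod z2 = 1" "cmod w2 = 1" "x0 + x1*z2 + x2*w2 = 0"
  shows "(z0 = z1 \<and> w0 = w1) \<or> (z0 = z2 \<and> w0 = w2) \<or> (z1 = z2 \<and> w1 = w2)"
proof -
  define k where "k = cnj x0 * x1"
  have k0: "k \<noteq> 0" using nz by (simp add: k_def)
  have eq: "z = z' \<and> w = w'" if "x0 + x1*z + x2*w = 0" "x0 + x1*z' + x2*w' = 0"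
     "Im (k*z) = Im (k*z')" "Re (k*z) = Re (k*z')" for z z' w w'
  proof -
    have "k*z = k*z'" using that(3,4) by (simp add: complex_eq_iff)
    then have zz: "z = z'" using k0 by simp
    then have "x2*w = x2*w'" using that(1,2) by (metis add_left_cancel)
    then show ?thesis using zz nz(3) by simp
  qed
  note a0 = tri_aux[OF s0, folded k_def] and a1 = tri_aux[OF s1, folded k_def]
    and a2 = tri_aux[OF s2, folded k_def]
  have "Im (k*z0) = Im (k*z1) \<or> Im (k*z0) = Im (k*z2) \<or> Im (k*z1) = Im (k*z2)"
    using sq3 a0(2) a1(2) a2(2) by metis
  then show ?thesis using eq s0(3) s1(3) s2(3) a0(1) a1(1) a2(1) by metis
qed

lemma prop_cols:
  fixes H :: "complex^6^6" and r :: "3 \<Rightarrow> 6"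
  assumes had: "complex_hadamard H" and tt: "t \<noteq> t'" and r: "inj r"
    and lam: "\<And>s. H$(r s)$t' = m * H$(r s)$t"
  shows "H2red H"
proof -
  have "H2red (\<chi> i j. H$j$i)"
    by (rule prop_rows[OF had_transpose[OF had] tt r, of m]) (simp add: lam)
  then show ?thesis by (rule H2red_transpose)
qed

lemma det_H2red:
  fixes H :: "complex^6^6"
  assumes had: "complex_hadamard H" and r: "inj r" and c: "inj c"
    and d: "det (submatrix3 H r c) = 0"
  shows "H2red H"
proof -
  define A where "A = submatrix3 H r c"
  have "\<not> invertible A" using d invertible_det_nz A_def by blast
  then have "\<not> (\<forall>x. A *v x = 0 \<longrightarrow> x = 0)"
    using matrix_left_invertible_ker matrix_left_right_inverse invertible_def by metis
  then obtain x where x0: "x \<noteq> 0" and Ax: "A *v x = 0" by blast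
  define a where "a s t = H$(r s)$(c t)" for s t
  have au: "cmod (a s t) = 1" for s t using had_unit[OF had] by (simp add: a_def)
  have anz: "a s t \<noteq> 0" for s t using au[of s t] by auto
  have eq: "x$1 * a s 1 + x$2 * a s 2 + x$3 * a s 3 = 0" for s
  proof -
    have "(A *v x)$s = 0" using Ax by simp
    then show ?thesis by (simp add: matrix_vector_mult_def sum_3 A_def submatrix3_def a_def mult.commute)
  qed
  have notall: "\<not> (x$1 = 0 \<and> x$2 = 0 \<and> x$3 = 0)"
  proof
    assume "x$1 = 0 \<and> x$2 = 0 \<and> x$3 = 0"
    then have "x = 0" by (simp add: vec_eq_iff forall_3)
    then show False using x0 by simp
  qed
  have c12: "c 1 \<noteq> c 2" and c13: "c 1 \<noteq> c 3" and c23: "c 2 \<noteq> c 3"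
    using c by (auto dest: injD)
  show ?thesis
  proof (cases "x$3 = 0")
    case True
    have x2: "x$2 \<noteq> 0"
    proof
      assume "x$2 = 0"
      then have "x$1 * a 1 1 = 0" using eq[of 1] True by simp
      then show False using anz notall True \<open>x$2 = 0\<close> by simp
    qed
    show ?thesis
    proof (rule prop_cols[OF had c12 r, of "- x$1 / x$2"])
      fix s
      have "x$1 * a s 1 + x$2 * a s 2 = 0" using eq[of s] True by simp
      then show "H$(r s)$(c 2) = - x$1 / x$2 * H$(r s)$(c 1)"
        using x2 by (simp add: a_def field_simps add_eq_0_iff)
    qed
  next
    case x3: False
    show ?thesis
    proof (cases "x$2 = 0")
      case True
      show ?thesis
      proof (rule prop_cols[OF had c13 r, of "- x$1 / x$3"])
        fix s
        have "x$1 * a s 1 + x$3 * a s 3 = 0" using eq[of s] True by simp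
        then show "H$(r s)$(c 3) = - x$1 / x$3 * H$(r s)$(c 1)"
          using x3 by (simp add: a_def field_simps add_eq_0_iff)
      qed
    next
      case x2: False
      show ?thesis
      proof (cases "x$1 = 0")
        case True
        show ?thesis
        proof (rule prop_cols[OF had c23 r, of "- x$2 / x$3"])
          fix s
          have "x$2 * a s 2 + x$3 * a s 3 = 0" using eq[of s] True by simp
          then show "H$(r s)$(c 3) = - x$2 / x$3 * H$(r s)$(c 2)"
            using x3 by (simp add: a_def field_simps add_eq_0_iff)
        qed
      next
        case x1: False
        have sol: "cmod (a s 2 / a s 1) = 1 \<and> cmod (a s 3 / a s 1) = 1 \<and>
            x$1 + x$2 * (a s 2 / a s 1) + x$3 * (a s 3 / a s 1) = 0" for s
        proof -
          have "(x$1 * a s 1 + x$2 * a s 2 + x$3 * a s 3) / a s 1 = 0" using eq[of s] by simp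
          then show ?thesis using au anz[of s 1] by (simp add: norm_divide add_divide_distrib)
        qed
        have rowprop: "H2red H" if ss: "s \<noteq> s'" and z: "a s' 2 / a s' 1 = a s 2 / a s 1"
            and w: "a s' 3 / a s' 1 = a s 3 / a s 1" for s s'
        proof (rule prop_rows[OF had _ c, of "r s" "r s'" "a s' 1 / a s 1"])
          show "r s \<noteq> r s'" using ss r by (auto dest: injD)
          fix t :: 3
          have "t = 1 \<or> t = 2 \<or> t = 3" by (rule exhaust_3)
          moreover have "a s' 1 = a s' 1 / a s 1 * a s 1" using anz[of s 1] by simp
          moreover have "a s' 2 = a s' 1 / a s 1 * a s 2"
            using z anz[of s 1] anz[of s' 1] by (simp add: field_simps)
          moreover have "a s' 3 = a s' 1 / a s 1 * a s 3"
            using w anz[of s 1] anz[of s' 1] by (simp add: field_simps)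
          ultimately show "H$(r s')$(c t) = a s' 1 / a s 1 * H$(r s)$(c t)"
            unfolding a_def by auto
        qed
        have "(a 1 2 / a 1 1 = a 2 2 / a 2 1 \<and> a 1 3 / a 1 1 = a 2 3 / a 2 1) \<or>
              (a 1 2 / a 1 1 = a 3 2 / a 3 1 \<and> a 1 3 / a 1 1 = a 3 3 / a 3 1) \<or>
              (a 2 2 / a 2 1 = a 3 2 / a 3 1 \<and> a 2 3 / a 2 1 = a 3 3 / a 3 1)"
          using tri[OF x1 x2 x3] sol by blast
        then show ?thesis
        proof (elim disjE conjE)
          assume "a 1 2 / a 1 1 = a 2 2 / a 2 1" "a 1 3 / a 1 1 = a 2 3 / a 2 1"
          then show ?thesis using rowprop[of 1 2] by simp
        next
          assume "a 1 2 / a 1 1 = a 3 2 / a 3 1" "a 1 3 / a 1 1 = a 3 3 / a 3 1"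
          then show ?thesis using rowprop[of 1 3] by simp
        next
          assume "a 2 2 / a 2 1 = a 3 2 / a 3 1" "a 2 3 / a 2 1 = a 3 3 / a 3 1"
          then show ?thesis using rowprop[of 2 3] by simp
        qed
      qed
    qed
  qed
qed

definition Pm :: "('n \<Rightarrow> 'n) \<Rightarrow> complex^'n^'n" where
  "Pm p = (\<chi> a b. if b = p a then 1 else 0)"
definition Dm :: "('n \<Rightarrow> complex) \<Rightarrow> complex^'n^'n" where
  "Dm d = (\<chi> a b. if a = b then d a else 0)"

lemma Pm_left: "(Pm p ** M)$a$b = M$(p a)$b"
  by (simp add: Pm_def matrix_matrix_mult_def if_distrib[of "\<lambda>x. x * _"] cong: if_cong)

lemma Dm_left: "(Dm d ** M)$a$b = d a * M$a$b"
  by (simp add: Dm_def matrix_matrix_mult_def if_distrib[of "\<lambda>x. x * _"] cong: if_cong)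

lemma Dm_right: "(M ** Dm d)$a$b = M$a$b * d b"
  by (simp add: Dm_def matrix_matrix_mult_def if_distrib[of "\<lambda>x. _ * x"] cong: if_cong)

lemma Pm_right:
  assumes inv: "\<And>x. q (q x) = x"
  shows "(M ** Pm q)$a$b = M$a$(q b)"
proof -
  have "\<And>t. (b = q t) = (t = q b)" using inv by metis
  then show ?thesis
    by (simp add: Pm_def matrix_matrix_mult_def if_distrib[of "\<lambda>x. _ * x"] cong: if_cong)
qed

lemma sum_invol: "(\<And>x. q (q x) = x) \<Longrightarrow> (\<Sum>t\<in>UNIV. f (q t)) = (\<Sum>t\<in>UNIV. f t)"
  by (rule sum.reindex_bij_witness[where i=q and j=q]) auto

lemma H2red_K6:
  fixes H :: "complex^6^6"
  assumes had: "complex_hadamard H" and red: "H2red H"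
  shows "in_K6_3 H"
proof -
  obtain i k j l where ik: "i \<noteq> k" and jl: "j \<noteq> l"
    and rel: "H$i$j * H$k$l + H$i$l * H$k$j = 0"
    using red unfolding H2red_def by blast
  define p where "p = Transposition.transpose 0 i"
  define q where "q = Transposition.transpose 0 j"
  have pp: "p (p x) = x" for x by (simp add: p_def)
  have qq: "q (q x) = x" for x by (simp add: q_def)
  define d1 where "d1 \<rho> = cnj (H$\<rho>$j)" for \<rho>
  define d2 where "d2 \<sigma> = cnj (H$i$\<sigma>) * H$i$j" for \<sigma>
  have u: "cmod (H$a$b) = 1" for a b using had_unit[OF had] .
  have uc: "H$a$b * cnj (H$a$b) = 1" for a b using unit_mult_cnj[OF u] .
  have ucc: "cnj (H$a$b) * H$a$b = 1" for a b using uc by (simp add: mult.commute)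
  have d1u: "cmod (d1 x) = 1" for x by (simp add: d1_def u)
  have d2u: "cmod (d2 x) = 1" for x by (simp add: d2_def u norm_mult)
  define K where "K = Pm p ** Dm d1 ** H ** Dm d2 ** Pm q"
  have Ke: "K$a$b = d1 (p a) * H$(p a)$(q b) * d2 (q b)" for a b
  proof -
    have "Pm p ** Dm d1 ** H = Pm p ** (Dm d1 ** H)" by (simp add: matrix_mul_assoc)
    then show ?thesis by (simp add: K_def Pm_right[OF qq] Dm_right Pm_left Dm_left)
  qed
  have permP: "permutation_matrix (Pm p)"
    unfolding permutation_matrix_def Pm_def p_def by (auto intro: permutes_swap_id)
  have permQ: "permutation_matrix (Pm q)"
    unfolding permutation_matrix_def Pm_def q_def by (auto intro: permutes_swap_id)
  have D1: "diagonal_unitary (Dm d1)" unfolding diagonal_unitary_def Dm_def using d1u by blast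
  have D2: "diagonal_unitary (Dm d2)" unfolding diagonal_unitary_def Dm_def using d2u by blast
  have equiv: "hadamard_equivalent H K"
    unfolding hadamard_equivalent_def K_def using permP permQ D1 D2 by blast
  have Ku: "cmod (K$a$b) = 1" for a b by (simp add: Ke norm_mult d1u d2u u)
  have Korth: "K ** conj_transpose K = of_nat CARD(6) *\<^sub>R mat 1"
    unfolding vec_eq_iff
  proof (intro allI)
    fix a b :: 6
    have "(K ** conj_transpose K)$a$b = (\<Sum>t\<in>UNIV. K$a$t * cnj (K$b$t))"
      by (simp add: matrix_matrix_mult_def conj_transpose_def)
    also have "\<dots> = (\<Sum>t\<in>UNIV. (d1 (p a) * cnj (d1 (p b))) * (H$(p a)$(q t) * cnj (H$(p b)$(q t))) * (d2 (q t) * cnj (d2 (q t))))"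
      by (simp add: Ke mult_ac)
    also have "\<dots> = (d1 (p a) * cnj (d1 (p b))) * (\<Sum>t\<in>UNIV. H$(p a)$(q t) * cnj (H$(p b)$(q t)))"
      by (simp add: unit_mult_cnj[OF d2u] sum_distrib_left)
    also have "\<dots> = (d1 (p a) * cnj (d1 (p b))) * (\<Sum>t\<in>UNIV. H$(p a)$t * cnj (H$(p b)$t))"
      using sum_invol[OF qq, of "\<lambda>t. H$(p a)$t * cnj (H$(p b)$t)"] by simp
    also have "\<dots> = (if a = b then 6 else 0)"
    proof (cases "a = b")
      case True
      then show ?thesis using had_orth[OF had, of "p a" "p b"] unit_mult_cnj[OF d1u, of "p a"] by simp
    next
      case False
      then have "p a \<noteq> p b" using pp by metis
      then show ?thesis using had_orth[OF had, of "p a" "p b"] False by simp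
    qed
    finally show "(K ** conj_transpose K)$a$b = (of_nat CARD(6) *\<^sub>R mat 1 :: complex^6^6)$a$b"
      by (simp add: mat_def vector_scaleR_component) (simp add: scaleR_conv_of_real)
  qed
  have Khad: "complex_hadamard K" unfolding complex_hadamard_def using Ku Korth by blast
  have deph: "dephased K"
    unfolding dephased_def
  proof (intro conjI allI)
    fix b
    have p0: "p 0 = i" unfolding p_def by (rule transpose_apply_first)
    have "K$0$b = (cnj (H$i$j) * H$i$j) * (H$i$(q b) * cnj (H$i$(q b)))"
      by (simp only: Ke p0 d1_def d2_def ac_simps)
    then show "K$0$b = 1" by (simp only: uc ucc) simp
  next
    fix a
    have q0: "q 0 = j" unfolding q_def by (rule transpose_apply_first)
    have "K$a$0 = (cnj (H$(p a)$j) * H$(p a)$j) * (cnj (H$i$j) * H$i$j)"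
      by (simp only: Ke q0 d1_def d2_def ac_simps)
    then show "K$a$0 = 1" by (simp only: uc ucc) simp
  qed
  have core: "core_has_minus_one K"
    unfolding core_has_minus_one_def
  proof (intro exI conjI)
    have p0: "p 0 = i" unfolding p_def by (rule transpose_apply_first)
    have q0: "q 0 = j" unfolding q_def by (rule transpose_apply_first)
    show "p k \<noteq> 0"
    proof
      assume "p k = 0"
      then have "p (p k) = i" using p0 by simp
      then show False using pp ik by simp
    qed
    show "q l \<noteq> 0"
    proof
      assume "q l = 0"
      then have "q (q l) = j" using q0 by simp
      then show False using qq jl by simp
    qed
    have "K$(p k)$(q l) = cnj (H$k$j) * cnj (H$i$l) * (H$i$j * H$k$l)"
      by (simp add: Ke pp qq d1_def d2_def mult_ac)
    also have "H$i$j * H$k$l = - (H$i$l * H$k$j)" using rel by (simp add: eq_neg_iff_add_eq_0)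
    also have "cnj (H$k$j) * cnj (H$i$l) * - (H$i$l * H$k$j) = - ((cnj (H$i$l) * H$i$l) * (cnj (H$k$j) * H$k$j))"
      by (simp add: mult_ac)
    finally show "K$(p k)$(q l) = -1" by (simp add: ucc)
  qed
  show ?thesis unfolding in_K6_3_def using Khad equiv deph core by blast
qed

theorem proposition2p24:
  fixes H :: "complex ^ 6 ^ 6"
  assumes "complex_hadamard H"
    and "inj r" and "inj c"
    and "det (submatrix3 H r c) = 0"
  shows "in_K6_3 H"
  using H2red_K6[OF assms(1) det_H2red[OF assms]] .

end
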